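(* Assume $p=m$, $D=0$, and $\mathrm{rank}\begin{bmatrix} I-A & B\\ C & 0\end{bmatrix}=n+m$. Let $(X,U)$ be a minimizer of Problem 3, let $(K,H,G,F)$ be the unique solution of $\begin{bmatrix} K & H \\ G & F \end{bmatrix}\begin{bmatrix} X \\ Z \end{bmatrix} = \begin{bmatrix} U \\ V \end{bmatrix}$, assume $\det(I-(A+BK))\neq0$ and $\det(I-F)\neq0$, and set $M=\big(C(I-(A+BK))^{-1}B\big)^{-1}$, $L=-G(I-(A+BK))^{-1}BM$. Let $r(t)$ be a step reference with $r(t)=r_-$ for $t<0$ and $r(t)=r_+$ for $t\ge 0$ ($r_\pm\in\mathbb{R}^m$ constant). Then for every initial state $x_0\in\mathbb{R}^n$, the closed loop of the plant with the tracking compensator $z_r(t+1)=Fz_r(t)+Gx(t)+Lr(t)$, $u(t)=Hz_r(t)+Kx(t)+Mr(t)$, $z_r(0)=0$, satisfies $\lim_{t\to\infty}\|y(t)-r(t)\|_2=0$ (zero steady-state tracking error).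
   Context: Plant: $x(t+1)=Ax(t)+Bu(t)$, $x(0)=x_0$, $y(t)=Cx(t)$, with $x\in\mathbb{R}^n$, $u,y\in\mathbb{R}^m$, $(A,B)$ reachable, horizon $N\ge 2$. $P\in\mathbb{R}^{N\times N}$ is the nilpotent shift matrix $P=\begin{bmatrix}0 & 0\\ I_{N-1} & 0\end{bmatrix}$; $\otimes$ is the Kronecker product; $\mathrm{e}_1\in\mathbb{R}^N$; $\|W\|_1=\sum_{i,j}|w_{ij}|$. Problem 3 (minimum attention control): minimize $\|U(P\otimes I_n)-U\|_1$ over $X\in\mathbb{R}^{n\times nN}$, $U\in\mathbb{R}^{m\times nN}$ subject to $AX+BU=X(P\otimes I_n)$ and $X(\mathrm{e}_1\otimes I_n)=I_n$. $Z=\begin{bmatrix}0_{n(N-1)\times n} & I_{n(N-1)}\end{bmatrix}$, $V=Z(P\otimes I_n)$. *)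

theory Defs
  imports "Jordan_Normal_Form.DL_Rank" "Jordan_Normal_Form.Gauss_Jordan_Elimination"
begin

text \<open>Kronecker product of matrices.\<close>
definition kron :: "real mat \<Rightarrow> real mat \<Rightarrow> real mat" where
  "kron P Q = mat (dim_row P * dim_row Q) (dim_col P * dim_col Q)
     (\<lambda>(i,j). P $$ (i div dim_row Q, j div dim_col Q) * Q $$ (i mod dim_row Q, j mod dim_col Q))"

text \<open>Nilpotent shift matrix P (N x N): ones on the first subdiagonal.\<close>
definition shift_mat :: "nat \<Rightarrow> real mat" where
  "shift_mat N = mat N N (\<lambda>(i,j). if i = Suc j then 1 else 0)"

text \<open>First standard basis vector e1 of R^N, as an N x 1 matrix.\<close>
definition e1_mat :: "nat \<Rightarrow> real mat" where
  "e1_mat N = mat N 1 (\<lambda>(i,j). if i = 0 then 1 else 0)"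

text \<open>Z = [0_{n(N-1) x n}, I_{n(N-1)}].\<close>
definition Z_mat :: "nat \<Rightarrow> nat \<Rightarrow> real mat" where
  "Z_mat n N = mat (n * (N - 1)) (n * N) (\<lambda>(i,j). if j = i + n then 1 else 0)"

text \<open>Entrywise 1-norm.\<close>
definition norm1_mat :: "real mat \<Rightarrow> real" where
  "norm1_mat W = (\<Sum>i<dim_row W. \<Sum>j<dim_col W. \<bar>W $$ (i,j)\<bar>)"

text \<open>Euclidean norm of a vector.\<close>
definition norm2_vec :: "real vec \<Rightarrow> real" where
  "norm2_vec v = sqrt (\<Sum>i<dim_vec v. (v $ i)\<^sup>2)"

text \<open>Feasible set of Problem 3.\<close>
definition prob3_feasible :: "nat \<Rightarrow> nat \<Rightarrow> nat \<Rightarrow> real mat \<Rightarrow> real mat \<Rightarrow> real mat \<Rightarrow> real mat \<Rightarrow> bool" where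
  "prob3_feasible n m N A B X U \<longleftrightarrow>
     X \<in> carrier_mat n (n * N) \<and> U \<in> carrier_mat m (n * N) \<and>
     A * X + B * U = X * kron (shift_mat N) (1\<^sub>m n) \<and>
     X * kron (e1_mat N) (1\<^sub>m n) = 1\<^sub>m n"

text \<open>Objective of Problem 3.\<close>
definition prob3_cost :: "nat \<Rightarrow> nat \<Rightarrow> real mat \<Rightarrow> real" where
  "prob3_cost n N U = norm1_mat (U * kron (shift_mat N) (1\<^sub>m n) - U)"

definition prob3_minimizer :: "nat \<Rightarrow> nat \<Rightarrow> nat \<Rightarrow> real mat \<Rightarrow> real mat \<Rightarrow> real mat \<Rightarrow> real mat \<Rightarrow> bool" where
  "prob3_minimizer n m N A B X U \<longleftrightarrow>
     prob3_feasible n m N A B X U \<and>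
     (\<forall>X' U'. prob3_feasible n m N A B X' U' \<longrightarrow> prob3_cost n N U \<le> prob3_cost n N U')"

text \<open>Reachability matrix [B, AB, ..., A^(n-1) B] and reachability of (A,B).\<close>
definition reach_mat :: "nat \<Rightarrow> nat \<Rightarrow> real mat \<Rightarrow> real mat \<Rightarrow> real mat" where
  "reach_mat n m A B = mat n (n * m) (\<lambda>(i,j). ((A ^\<^sub>m (j div m)) * B) $$ (i, j mod m))"

definition reachable :: "nat \<Rightarrow> nat \<Rightarrow> real mat \<Rightarrow> real mat \<Rightarrow> bool" where
  "reachable n m A B \<longleftrightarrow> vec_space.rank n (reach_mat n m A B) = n"

text \<open>Matrix inverse (the library's Gauss-Jordan inverse).\<close>
definition minv :: "real mat \<Rightarrow> real mat" where
  "minv A = the (mat_inverse A)"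

end

theory Submission imports Defs begin

lemma S_carrier: "kron (shift_mat N) (1\<^sub>m n) \<in> carrier_mat (n*N) (n*N)"
  by (simp add: kron_def shift_mat_def mult.commute)

lemma E_carrier: "kron (e1_mat N) (1\<^sub>m n) \<in> carrier_mat (n*N) n"
  by (simp add: kron_def e1_mat_def mult.commute)

lemma S_entry: assumes "i < n*N" "j < n*N"
  shows "kron (shift_mat N) (1\<^sub>m n) $$ (i,j) = (if i = j + n then 1 else 0)"
proof -
  have n: "n > 0" using assms by (cases n) auto
  have idiv: "i div n < N" "j div n < N" using assms n
    by (simp_all add: less_mult_imp_div_less mult.commute)
  have "(i div n = Suc (j div n) \<and> i mod n = j mod n) \<longleftrightarrow> i = j + n"
  proof
    assume h: "i div n = Suc (j div n) \<and> i mod n = j mod n"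
    have "i = n * (i div n) + i mod n" by simp
    also have "\<dots> = n * (j div n) + j mod n + n" using h by simp
    also have "\<dots> = j + n" by simp
    finally show "i = j + n" .
  next
    assume "i = j + n" thus "i div n = Suc (j div n) \<and> i mod n = j mod n" using n by simp
  qed
  thus ?thesis using assms idiv n
    by (auto simp: kron_def shift_mat_def mult.commute)
qed

lemma E_entry: assumes "i < n*N" "j < n"
  shows "kron (e1_mat N) (1\<^sub>m n) $$ (i,j) = (if i = j then 1 else 0)"
proof -
  have n: "n > 0" using assms by (cases n) auto
  have idiv: "i div n < N" using assms n
    by (simp_all add: less_mult_imp_div_less mult.commute)
  have jd: "j div n = 0" "j mod n = j" using assms by simp_all
  have im: "i mod n < n" using n by simp
  have "kron (e1_mat N) (1\<^sub>m n) $$ (i,j) = e1_mat N $$ (i div n, j div n) * 1\<^sub>m n $$ (i mod n, j mod n)"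
    using assms by (simp add: kron_def e1_mat_def mult.commute)
  also have "\<dots> = (if i div n = 0 then 1 else 0) * (if i mod n = j then 1 else 0)"
    unfolding jd using idiv im assms by (simp add: e1_mat_def)
  also have "\<dots> = (if i = j then 1 else 0)"
  proof (cases "i < n")
    case True thus ?thesis by simp
  next
    case False
    hence "i div n \<noteq> 0" using n by (simp add: div_eq_0_iff)
    thus ?thesis using False assms by auto
  qed
  finally show ?thesis .
qed

lemma S_vec: assumes c: "c \<in> carrier_vec (n*N)" and i: "i < n*N"
  shows "(kron (shift_mat N) (1\<^sub>m n) *\<^sub>v c) $ i = (if n \<le> i then c $ (i - n) else 0)"
proof -
  have "(kron (shift_mat N) (1\<^sub>m n) *\<^sub>v c) $ i = (\<Sum>j<n*N. kron (shift_mat N) (1\<^sub>m n) $$ (i,j) * c $ j)"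
    using S_carrier[of N n] c i by (simp add: scalar_prod_def row_def lessThan_atLeast0)
  also have "\<dots> = (\<Sum>j<n*N. if j = i - n \<and> n \<le> i then c $ j else 0)"
    by (rule sum.cong) (auto simp: S_entry i)
  also have "\<dots> = (if n \<le> i then c $ (i - n) else 0)"
    using i by (auto simp: sum.delta)
  finally show ?thesis .
qed

lemma ZE: "Z_mat n N * kron (e1_mat N) (1\<^sub>m n) = 0\<^sub>m (n*(N-1)) n"
proof (rule eq_matI)
  fix i j assume i: "i < dim_row (0\<^sub>m (n*(N-1)) n :: real mat)" and j: "j < dim_col (0\<^sub>m (n*(N-1)) n :: real mat)"
  have "(Z_mat n N * kron (e1_mat N) (1\<^sub>m n)) $$ (i,j) = (\<Sum>k<n*N. Z_mat n N $$ (i,k) * kron (e1_mat N) (1\<^sub>m n) $$ (k,j))"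
    using E_carrier[of N n] i j by (simp add: Z_mat_def scalar_prod_def lessThan_atLeast0)
  also have "\<dots> = 0"
  proof (rule sum.neutral, rule ballI)
    fix k assume "k \<in> {..<n*N}"
    hence k: "k < n*N" by simp
    have ii: "i < n*(N-1)" "j < n" using i j by auto
    show "Z_mat n N $$ (i,k) * kron (e1_mat N) (1\<^sub>m n) $$ (k,j) = 0"
    proof (cases "k = i + n")
      case True
      hence "kron (e1_mat N) (1\<^sub>m n) $$ (k,j) = 0" using E_entry[OF k ii(2)] ii by simp
      thus ?thesis by simp
    next
      case False
      hence "Z_mat n N $$ (i,k) = 0" using k ii by (simp add: Z_mat_def)
      thus ?thesis by simp
    qed
  qed
  finally show "(Z_mat n N * kron (e1_mat N) (1\<^sub>m n)) $$ (i,j) = 0\<^sub>m (n*(N-1)) n $$ (i,j)" using i j by simp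
qed (auto simp: Z_mat_def E_carrier[THEN carrier_matD(2)])


lemma mult_mat_vec_uminus: assumes "A \<in> carrier_mat nr nc" "(v::real vec) \<in> carrier_vec nc"
  shows "A *\<^sub>v (- v) = - (A *\<^sub>v v)"
  using assms by (intro eq_vecI) auto

lemma minv_prop: assumes Q: "Q \<in> carrier_mat k k" and d: "det Q \<noteq> 0"
  shows "Q * minv Q = 1\<^sub>m k" "minv Q * Q = 1\<^sub>m k" "minv Q \<in> carrier_mat k k"
proof -
  have "Q \<in> Units (ring_mat TYPE(real) k ())" using det_non_zero_imp_unit[OF Q d] .
  then obtain W where "mat_inverse Q = Some W" using mat_inverse(1)[OF Q, of "()"] by (cases "mat_inverse Q") auto
  from mat_inverse(2)[OF Q this] this show "Q * minv Q = 1\<^sub>m k" "minv Q * Q = 1\<^sub>m k" "minv Q \<in> carrier_mat k k"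
    by (auto simp: minv_def)
qed

lemma CWB_nonsing:
  fixes A B C K W :: "real mat"
  assumes dims: "A \<in> carrier_mat n n" "B \<in> carrier_mat n m" "C \<in> carrier_mat m n" "K \<in> carrier_mat m n"
    "W \<in> carrier_mat n n"
    and QW: "(1\<^sub>m n - (A + B * K)) * W = 1\<^sub>m n"
    and rank: "vec_space.rank (n + m) (four_block_mat (1\<^sub>m n - A) B C (0\<^sub>m m m)) = n + m"
  shows "det (C * W * B) \<noteq> 0"
proof
  let ?T = "four_block_mat (1\<^sub>m n - A) B C (0\<^sub>m m m)"
  have T: "?T \<in> carrier_mat (n+m) (n+m)" using dims by auto
  have dT: "det ?T \<noteq> 0" using vec_space.det_rank_iff[OF T] rank by simp
  assume "det (C * W * B) = 0"
  then obtain v where v: "v \<in> carrier_vec m" "v \<noteq> 0\<^sub>v m" "(C * W * B) *\<^sub>v v = 0\<^sub>v m"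
    using det_0_iff_vec_prod_zero[of "C * W * B" m] dims by auto
  define \<xi> where "\<xi> = W *\<^sub>v (B *\<^sub>v v)"
  have xi: "\<xi> \<in> carrier_vec n" using dims v by (simp add: \<xi>_def)
  have "(C * W * B) *\<^sub>v v = (C * W) *\<^sub>v (B *\<^sub>v v)"
    using dims v by (intro assoc_mult_mat_vec) auto
  also have "\<dots> = C *\<^sub>v \<xi>" unfolding \<xi>_def
    using dims v by (intro assoc_mult_mat_vec) auto
  finally have Cxi: "C *\<^sub>v \<xi> = 0\<^sub>v m" using v by simp
  have "(1\<^sub>m n - (A + B * K)) *\<^sub>v \<xi> = B *\<^sub>v v"
    using dims v unfolding \<xi>_def
    by (subst assoc_mult_mat_vec[symmetric, of _ n n _ n], auto simp: QW)
  moreover have "(1\<^sub>m n - (A + B * K)) *\<^sub>v \<xi> = \<xi> - (A *\<^sub>v \<xi> + B *\<^sub>v (K *\<^sub>v \<xi>))"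
    using dims xi by (simp add: minus_mult_distrib_mat_vec[of _ n n] add_mult_distrib_mat_vec[of _ n n])
  ultimately have key: "\<xi> - (A *\<^sub>v \<xi> + B *\<^sub>v (K *\<^sub>v \<xi>)) = B *\<^sub>v v" by simp
  define w where "w = - (v + K *\<^sub>v \<xi>)"
  have w: "w \<in> carrier_vec m" using v dims xi by (simp add: w_def)
  have "?T *\<^sub>v (\<xi> @\<^sub>v w) = ((1\<^sub>m n - A) *\<^sub>v \<xi> + B *\<^sub>v w) @\<^sub>v (C *\<^sub>v \<xi> + 0\<^sub>m m m *\<^sub>v w)"
    using dims xi w by (subst four_block_mat_mult_vec) auto
  also have "(1\<^sub>m n - A) *\<^sub>v \<xi> + B *\<^sub>v w = 0\<^sub>v n"
  proof -
    have e1: "(1\<^sub>m n - A) *\<^sub>v \<xi> = \<xi> - A *\<^sub>v \<xi>"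
      using dims xi by (simp add: minus_mult_distrib_mat_vec[of _ n n])
    have e2: "B *\<^sub>v w = - (B *\<^sub>v v + B *\<^sub>v (K *\<^sub>v \<xi>))"
      using dims xi v unfolding w_def
      by (simp add: mult_mat_vec_uminus[of _ n m] mult_add_distrib_mat_vec[of _ n m])
    show ?thesis unfolding e1 e2
    proof (rule eq_vecI)
      fix i assume "i < dim_vec (0\<^sub>v n :: real vec)"
      hence i: "i < n" by simp
      have "(\<xi> - (A *\<^sub>v \<xi> + B *\<^sub>v (K *\<^sub>v \<xi>))) $ i = (B *\<^sub>v v) $ i" using key by simp
      thus "(\<xi> - A *\<^sub>v \<xi> + - (B *\<^sub>v v + B *\<^sub>v (K *\<^sub>v \<xi>))) $ i = 0\<^sub>v n $ i"
        using i dims xi v by simp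
    qed (use dims xi in auto)
  qed
  also have "C *\<^sub>v \<xi> + 0\<^sub>m m m *\<^sub>v w = 0\<^sub>v m" using Cxi w by auto
  also have "0\<^sub>v n @\<^sub>v 0\<^sub>v m = (0\<^sub>v (n+m) :: real vec)" by (intro eq_vecI) auto
  finally have T0: "?T *\<^sub>v (\<xi> @\<^sub>v w) = 0\<^sub>v (n+m)" .
  have "\<xi> @\<^sub>v w \<noteq> 0\<^sub>v (n+m)"
  proof
    assume z: "\<xi> @\<^sub>v w = 0\<^sub>v (n+m)"
    have xi0: "\<xi> = 0\<^sub>v n"
    proof (rule eq_vecI)
      fix i assume "i < dim_vec (0\<^sub>v n :: real vec)"
      hence i: "i < n" by simp
      have "(\<xi> @\<^sub>v w) $ i = 0" using z i by simp
      thus "\<xi> $ i = 0\<^sub>v n $ i" using i xi w by simp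
    qed (use xi in auto)
    have w0: "w = 0\<^sub>v m"
    proof (rule eq_vecI)
      fix i assume "i < dim_vec (0\<^sub>v m :: real vec)"
      hence i: "i < m" by simp
      have "(\<xi> @\<^sub>v w) $ (n + i) = 0" using z i by simp
      thus "w $ i = 0\<^sub>v m $ i" using i xi w by simp
    qed (use w in auto)
    have "v = 0\<^sub>v m"
    proof (rule eq_vecI)
      fix i assume "i < dim_vec (0\<^sub>v m :: real vec)"
      hence i: "i < m" by simp
      have "w $ i = 0" using w0 i by simp
      moreover have "(K *\<^sub>v \<xi>) $ i = 0" using xi0 dims i by simp
      ultimately show "v $ i = 0\<^sub>v m $ i" using i v dims xi by (simp add: w_def)
    qed (use v in auto)
    thus False using v by simp
  qed
  hence "det ?T = 0" using det_0_iff_vec_prod_zero[OF T] T0 xi w by auto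
  thus False using dT by simp
qed

theorem proposition1:
  fixes n m N :: nat
    and A B C X U K H G F M L :: "real mat"
    and r_plus x0 :: "real vec"
    and x zr :: "nat \<Rightarrow> real vec"
    and u y :: "nat \<Rightarrow> real vec"
  assumes dims: "A \<in> carrier_mat n n" "B \<in> carrier_mat n m" "C \<in> carrier_mat m n"
    and N2: "N \<ge> 2"
    and reach: "reachable n m A B"
    and rank: "vec_space.rank (n + m) (four_block_mat (1\<^sub>m n - A) B C (0\<^sub>m m m)) = n + m"
    and minim: "prob3_minimizer n m N A B X U"
    and KHGF_dims: "K \<in> carrier_mat m n" "H \<in> carrier_mat m (n * (N - 1))"
       "G \<in> carrier_mat (n * (N - 1)) n" "F \<in> carrier_mat (n * (N - 1)) (n * (N - 1))"
    and KHGF_eq1: "K * X + H * Z_mat n N = U"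
    and KHGF_eq2: "G * X + F * Z_mat n N = Z_mat n N * kron (shift_mat N) (1\<^sub>m n)"
    and det1: "det (1\<^sub>m n - (A + B * K)) \<noteq> 0"
    and det2: "det (1\<^sub>m (n * (N - 1)) - F) \<noteq> 0"
    and M_eq: "M = minv (C * minv (1\<^sub>m n - (A + B * K)) * B)"
    and L_eq: "L = - (G * minv (1\<^sub>m n - (A + B * K)) * B * M)"
    and r_dim: "r_plus \<in> carrier_vec m"
    and x0_dim: "x0 \<in> carrier_vec n"
    and x_init: "x 0 = x0"
    and zr_init: "zr 0 = 0\<^sub>v (n * (N - 1))"
    and plant: "\<And>t. x (Suc t) = A *\<^sub>v x t + B *\<^sub>v u t"
    and outp: "\<And>t. y t = C *\<^sub>v x t"
    and comp_z: "\<And>t. zr (Suc t) = F *\<^sub>v zr t + G *\<^sub>v x t + L *\<^sub>v r_plus"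
    and comp_u: "\<And>t. u t = H *\<^sub>v zr t + K *\<^sub>v x t + M *\<^sub>v r_plus"
  shows "(\<lambda>t. norm2_vec (y t - r_plus)) \<longlonglongrightarrow> 0"
proof -
  let ?S = "kron (shift_mat N) (1\<^sub>m n)"
  let ?E = "kron (e1_mat N) (1\<^sub>m n)"
  let ?Z = "Z_mat n N"
  let ?Q = "1\<^sub>m n - (A + B * K)"
  define W where "W = minv ?Q"
  have S: "?S \<in> carrier_mat (n*N) (n*N)" by (rule S_carrier)
  have E: "?E \<in> carrier_mat (n*N) n" by (rule E_carrier)
  have Zc: "?Z \<in> carrier_mat (n*(N-1)) (n*N)" by (simp add: Z_mat_def)
  from minim have X: "X \<in> carrier_mat n (n*N)" and Uc: "U \<in> carrier_mat m (n*N)"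
    and XS: "A * X + B * U = X * ?S" and XE: "X * ?E = 1\<^sub>m n"
    unfolding prob3_minimizer_def prob3_feasible_def by auto
  have Q: "?Q \<in> carrier_mat n n" using dims KHGF_dims by auto
  from minv_prop[OF Q det1] have QW: "?Q * W = 1\<^sub>m n" and Wc: "W \<in> carrier_mat n n"
    unfolding W_def by auto
  have dCWB: "det (C * W * B) \<noteq> 0"
    using CWB_nonsing[OF dims(1,2,3) KHGF_dims(1) Wc QW rank] .
  have CWB: "C * W * B \<in> carrier_mat m m" using dims Wc by auto
  from minv_prop[OF CWB dCWB] have CWBM: "C * W * B * M = 1\<^sub>m m" and Mc: "M \<in> carrier_mat m m"
    unfolding M_eq W_def by auto
  define xs where "xs = W *\<^sub>v (B *\<^sub>v (M *\<^sub>v r_plus))"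
  have xsc: "xs \<in> carrier_vec n" using Wc dims Mc r_dim by (simp add: xs_def)
  have Qxs: "?Q *\<^sub>v xs = B *\<^sub>v (M *\<^sub>v r_plus)"
    using Q Wc dims Mc r_dim QW unfolding xs_def
    by (subst assoc_mult_mat_vec[symmetric, of _ n n _ n]) auto
  have chain: "\<And>(D::real mat) k. D \<in> carrier_mat k n \<Longrightarrow> (D * W * B * M) *\<^sub>v r_plus = D *\<^sub>v xs"
  proof -
    fix D :: "real mat" and k assume D: "D \<in> carrier_mat k n"
    have "(D * W * B * M) *\<^sub>v r_plus = (D * W * B) *\<^sub>v (M *\<^sub>v r_plus)"
      using D Wc dims Mc r_dim by (intro assoc_mult_mat_vec) auto
    also have "\<dots> = (D * W) *\<^sub>v (B *\<^sub>v (M *\<^sub>v r_plus))"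
      using D Wc dims Mc r_dim by (intro assoc_mult_mat_vec) auto
    also have "\<dots> = D *\<^sub>v xs" unfolding xs_def
      using D Wc dims Mc r_dim by (intro assoc_mult_mat_vec) auto
    finally show "(D * W * B * M) *\<^sub>v r_plus = D *\<^sub>v xs" .
  qed
  have Cxs: "C *\<^sub>v xs = r_plus" using chain[OF dims(3)] CWBM r_dim by simp
  have Lr: "L *\<^sub>v r_plus = - (G *\<^sub>v xs)"
    using chain[OF KHGF_dims(3)] unfolding L_eq W_def[symmetric]
    using KHGF_dims Wc dims Mc r_dim by (subst uminus_mult_mat_vec) auto
  have Qxs2: "?Q *\<^sub>v xs = xs - (A *\<^sub>v xs + B *\<^sub>v (K *\<^sub>v xs))"
    using dims KHGF_dims xsc by (simp add: minus_mult_distrib_mat_vec[of _ n n] add_mult_distrib_mat_vec[of _ n n])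
  have fix_i: "\<And>i. i < n \<Longrightarrow> xs $ i = (A *\<^sub>v xs) $ i + (B *\<^sub>v (K *\<^sub>v xs)) $ i + (B *\<^sub>v (M *\<^sub>v r_plus)) $ i"
  proof -
    fix i assume i: "i < n"
    have "(?Q *\<^sub>v xs) $ i = (B *\<^sub>v (M *\<^sub>v r_plus)) $ i" using Qxs by simp
    thus "xs $ i = (A *\<^sub>v xs) $ i + (B *\<^sub>v (K *\<^sub>v xs)) $ i + (B *\<^sub>v (M *\<^sub>v r_plus)) $ i"
      unfolding Qxs2 using i dims KHGF_dims xsc by simp
  qed
  define c0 where "c0 = ?E *\<^sub>v (x0 - xs)"
  define cs where "cs = rec_nat c0 (\<lambda>_ c. ?S *\<^sub>v c)"
  have cs0: "cs 0 = c0" and csS: "\<And>t. cs (Suc t) = ?S *\<^sub>v cs t" by (simp_all add: cs_def)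
  have csc: "\<And>t. cs t \<in> carrier_vec (n*N)"
  proof -
    fix t show "cs t \<in> carrier_vec (n*N)"
      by (induction t) (use E S x0_dim xsc in \<open>auto simp: cs0 csS c0_def\<close>)
  qed
  have Xc0: "X *\<^sub>v c0 = x0 - xs"
  proof -
    have "X *\<^sub>v c0 = (X * ?E) *\<^sub>v (x0 - xs)" unfolding c0_def
      using X E x0_dim xsc by (intro assoc_mult_mat_vec[symmetric]) auto
    thus ?thesis using XE x0_dim xsc by simp
  qed
  have Zc0: "?Z *\<^sub>v c0 = 0\<^sub>v (n*(N-1))"
  proof -
    have "?Z *\<^sub>v c0 = (?Z * ?E) *\<^sub>v (x0 - xs)" unfolding c0_def
      using Zc E x0_dim xsc by (intro assoc_mult_mat_vec[symmetric]) auto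
    thus ?thesis using ZE[of n N] x0_dim xsc by (auto intro!: eq_vecI)
  qed
  have inv: "x t = X *\<^sub>v cs t + xs \<and> zr t = ?Z *\<^sub>v cs t" for t
  proof (induction t)
    case 0
    have "x 0 = X *\<^sub>v cs 0 + xs" unfolding cs0 Xc0 x_init
      using x0_dim xsc by (intro eq_vecI) auto
    thus ?case using Zc0 zr_init cs0 by simp
  next
    case (Suc t)
    let ?c = "cs t" let ?a = "X *\<^sub>v cs t" let ?b = "?Z *\<^sub>v cs t"
    have c: "?c \<in> carrier_vec (n*N)" by (rule csc)
    have a: "?a \<in> carrier_vec n" using X c by simp
    have b: "?b \<in> carrier_vec (n*(N-1))" using Zc c by simp
    have Uc_eq: "U *\<^sub>v ?c = K *\<^sub>v ?a + H *\<^sub>v ?b"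
      using KHGF_eq1[symmetric] KHGF_dims X Zc c
      by (simp add: add_mult_distrib_mat_vec[of _ m "n*N"])
    have XSc: "X *\<^sub>v cs (Suc t) = A *\<^sub>v ?a + (B *\<^sub>v (K *\<^sub>v ?a) + B *\<^sub>v (H *\<^sub>v ?b))"
    proof -
      have "X *\<^sub>v cs (Suc t) = (X * ?S) *\<^sub>v ?c" unfolding csS
        using X S c by (intro assoc_mult_mat_vec[symmetric]) auto
      also have "\<dots> = (A * X + B * U) *\<^sub>v ?c" using XS by simp
      also have "\<dots> = A *\<^sub>v ?a + B *\<^sub>v (U *\<^sub>v ?c)"
        using dims X Uc c by (simp add: add_mult_distrib_mat_vec[of _ n "n*N"])
      also have "\<dots> = A *\<^sub>v ?a + (B *\<^sub>v (K *\<^sub>v ?a) + B *\<^sub>v (H *\<^sub>v ?b))"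
        unfolding Uc_eq using dims KHGF_dims a b by (simp add: mult_add_distrib_mat_vec[of _ n m])
      finally show ?thesis .
    qed
    have ZSc: "?Z *\<^sub>v cs (Suc t) = G *\<^sub>v ?a + F *\<^sub>v ?b"
    proof -
      have "?Z *\<^sub>v cs (Suc t) = (?Z * ?S) *\<^sub>v ?c" unfolding csS
        using Zc S c by (intro assoc_mult_mat_vec[symmetric]) auto
      also have "\<dots> = (G * X + F * ?Z) *\<^sub>v ?c" using KHGF_eq2 by simp
      also have "\<dots> = G *\<^sub>v ?a + F *\<^sub>v ?b"
        using KHGF_dims X Zc c by (simp add: add_mult_distrib_mat_vec[of _ "n*(N-1)" "n*N"])
      finally show ?thesis .
    qed
    have xS: "x (Suc t) = A *\<^sub>v ?a + A *\<^sub>v xs + (B *\<^sub>v (H *\<^sub>v ?b) + (B *\<^sub>v (K *\<^sub>v ?a) + B *\<^sub>v (K *\<^sub>v xs)) + B *\<^sub>v (M *\<^sub>v r_plus))"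
      unfolding plant comp_u using Suc.IH dims KHGF_dims Mc a b xsc r_dim
      by (simp add: mult_add_distrib_mat_vec[of _ n n] mult_add_distrib_mat_vec[of _ n m]
          mult_add_distrib_mat_vec[of _ m n])
    have "x (Suc t) = X *\<^sub>v cs (Suc t) + xs"
      unfolding xS XSc
    proof (rule eq_vecI)
      fix i assume "i < dim_vec (A *\<^sub>v ?a + (B *\<^sub>v (K *\<^sub>v ?a) + B *\<^sub>v (H *\<^sub>v ?b)) + xs)"
      hence i: "i < n" using dims xsc by simp
      show "(A *\<^sub>v ?a + A *\<^sub>v xs + (B *\<^sub>v (H *\<^sub>v ?b) + (B *\<^sub>v (K *\<^sub>v ?a) + B *\<^sub>v (K *\<^sub>v xs)) + B *\<^sub>v (M *\<^sub>v r_plus))) $ i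
         = (A *\<^sub>v ?a + (B *\<^sub>v (K *\<^sub>v ?a) + B *\<^sub>v (H *\<^sub>v ?b)) + xs) $ i"
        using fix_i[OF i] i dims xsc by simp
    qed (use dims xsc in simp)
    moreover have "zr (Suc t) = ?Z *\<^sub>v cs (Suc t)"
      unfolding comp_z ZSc Lr
    proof (rule eq_vecI)
      fix i assume "i < dim_vec (G *\<^sub>v ?a + F *\<^sub>v ?b)"
      hence i: "i < n*(N-1)" using KHGF_dims by simp
      show "(F *\<^sub>v zr t + G *\<^sub>v x t + - (G *\<^sub>v xs)) $ i = (G *\<^sub>v ?a + F *\<^sub>v ?b) $ i"
        using Suc.IH i KHGF_dims a b xsc by (simp add: mult_add_distrib_mat_vec[of _ "n*(N-1)" n])
    qed (use KHGF_dims in simp)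
    ultimately show ?case ..
  qed
  have cs_zero: "\<And>t i. i < n*N \<Longrightarrow> i < t*n \<Longrightarrow> cs t $ i = 0"
  proof -
    fix t show "\<And>i. i < n*N \<Longrightarrow> i < t*n \<Longrightarrow> cs t $ i = 0"
    proof (induction t)
      case 0 thus ?case by simp
    next
      case (Suc t)
      show ?case unfolding csS S_vec[OF csc Suc.prems(1)]
        using Suc.IH[of "i - n"] Suc.prems by auto
    qed
  qed
  have ev: "\<forall>t\<ge>N. norm2_vec (y t - r_plus) = 0"
  proof (intro allI impI)
    fix t assume tN: "N \<le> t"
    have "cs t = 0\<^sub>v (n*N)"
    proof (rule eq_vecI)
      fix i assume "i < dim_vec (0\<^sub>v (n*N) :: real vec)"
      hence i: "i < n*N" by simp
      have "n * N \<le> t * n" using tN by (metis mult.commute mult_le_mono1)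
      hence "i < t * n" using i by linarith
      thus "cs t $ i = 0\<^sub>v (n*N) $ i" using cs_zero[OF i] i by simp
    qed (use csc in auto)
    moreover have "X *\<^sub>v 0\<^sub>v (n*N) = 0\<^sub>v n" using X by (intro eq_vecI) auto
    ultimately have "x t = xs" using inv[of t] X xsc by simp
    hence "y t - r_plus = 0\<^sub>v m" using outp Cxs r_dim by simp
    thus "norm2_vec (y t - r_plus) = 0" by (simp add: norm2_vec_def)
  qed
  show ?thesis
    by (rule tendsto_eventually) (use ev in \<open>auto simp: eventually_sequentially\<close>)
qed

end
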